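(* For every constant $c>0$ there is a function $\varepsilon(n)\to 0$ as $n\to\infty$ such that \[ \Pr\left[\Gamma(G(n,c/n)) \leq \left(\tfrac12+\varepsilon(n)\right)\frac{\ln n}{\ln\ln n}\right]\to 1 \quad\text{as } n\to\infty . \]
   Context: $G(n,p)$ denotes the Erdős–Rényi random graph on vertex set $\{1,\dots,n\}$ in which each pair of vertices is joined independently with probability $p$. The Grundy number $\Gamma(G)$ is the largest number of colors used by the first-fit coloring algorithm (which colors vertices in a given order, each with the smallest positive integer not used on its previously colored neighbors) over all vertex orderings. *)

theory Defs
  imports Complex_Main
begin

text \<open>Vertex set of G(n,p) is {1..n}; a graph is a set of edges, each edge a 2-element set.\<close>

definition all_pairs :: "nat \<Rightarrow> nat set set" where
  "all_pairs n = {e. \<exists>u v. e = {u, v} \<and> u \<noteq> v \<and> u \<in> {1..n} \<and> v \<in> {1..n}}"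

definition prob_Gnp :: "nat \<Rightarrow> real \<Rightarrow> (nat set set \<Rightarrow> bool) \<Rightarrow> real" where
  "prob_Gnp n p P =
     (\<Sum>E\<in>Pow (all_pairs n). if P E
        then p ^ card E * (1 - p) ^ (card (all_pairs n) - card E) else 0)"

text \<open>First-fit colouring: colour 0 means "not yet coloured"; colours are positive.
  A vertex v receives the least positive colour not used by an already coloured neighbour.\<close>
definition ff_step :: "nat set set \<Rightarrow> nat \<Rightarrow> (nat \<Rightarrow> nat) \<Rightarrow> (nat \<Rightarrow> nat)" where
  "ff_step E v col =
     col(v := (LEAST k::nat. 1 \<le> k \<and> (\<forall>u. {u, v} \<in> E \<and> col u \<noteq> 0 \<longrightarrow> col u \<noteq> k)))"

definition ff_coloring :: "nat set set \<Rightarrow> nat list \<Rightarrow> (nat \<Rightarrow> nat)" where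
  "ff_coloring E xs = fold (ff_step E) xs (\<lambda>_. 0)"

definition grundy :: "nat \<Rightarrow> nat set set \<Rightarrow> nat" where
  "grundy n E = Max {card (ff_coloring E xs ` set xs) | xs. distinct xs \<and> set xs = {1..n}}"

end

theory Submission
  imports Defs "HOL-Real_Asymp.Real_Asymp"
begin


lemma sum_pow_card:
  fixes p q :: real
  assumes "finite T"
  shows "(\<Sum>E\<in>Pow T. p ^ card E * q ^ (card T - card E)) = (p + q) ^ card T"
proof -
  have "(p + q) ^ card T = (\<Prod>x\<in>T. p + q)" by simp
  also have "\<dots> = (\<Sum>X\<in>Pow T. (\<Prod>x\<in>X. p) * (\<Prod>x\<in>T-X. q))"
    by (rule prod_add[OF assms])
  also have "\<dots> = (\<Sum>E\<in>Pow T. p ^ card E * q ^ (card T - card E))"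
  proof (rule sum.cong)
    fix X assume "X \<in> Pow T"
    hence "card (T - X) = card T - card X" using assms
      by (simp add: card_Diff_subset finite_subset)
    thus "(\<Prod>x\<in>X. p) * (\<Prod>x\<in>T-X. q) = p ^ card X * q ^ (card T - card X)" by simp
  qed simp
  finally show ?thesis ..
qed

lemma finite_all_pairs: "finite (all_pairs n)"
proof -
  have "all_pairs n \<subseteq> Pow {1..n}" unfolding all_pairs_def by auto
  thus ?thesis by (rule finite_subset) simp
qed

lemma all_pairsD:
  assumes "{x, y} \<in> all_pairs n"
  shows "x \<noteq> y \<and> x \<in> {1..n} \<and> y \<in> {1..n}"
  using assms unfolding all_pairs_def by (auto simp: doubleton_eq_iff)

lemma all_pairsI:
  assumes "x \<noteq> y" "x \<in> {1..n}" "y \<in> {1..n}"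
  shows "{x, y} \<in> all_pairs n"
  using assms unfolding all_pairs_def by auto

lemma prob_total:
  assumes "0 \<le> p" "p \<le> 1"
  shows "prob_Gnp n p P + prob_Gnp n p (\<lambda>E. \<not> P E) = 1"
proof -
  have "prob_Gnp n p P + prob_Gnp n p (\<lambda>E. \<not> P E)
      = (\<Sum>E\<in>Pow (all_pairs n). p ^ card E * (1 - p) ^ (card (all_pairs n) - card E))"
    unfolding prob_Gnp_def sum.distrib[symmetric] by (rule sum.cong) auto
  also have "\<dots> = 1" using sum_pow_card[OF finite_all_pairs, of p "1 - p" n] by simp
  finally show ?thesis .
qed

lemma prob_nonneg:
  assumes "0 \<le> p" "p \<le> 1"
  shows "0 \<le> prob_Gnp n p P"
  unfolding prob_Gnp_def using assms by (intro sum_nonneg) auto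

lemma prob_le1:
  assumes "0 \<le> p" "p \<le> 1"
  shows "prob_Gnp n p P \<le> 1"
  using prob_total[OF assms, of n P] prob_nonneg[OF assms, of n "\<lambda>E. \<not> P E"] by linarith

lemma prob_mono:
  assumes "0 \<le> p" "p \<le> 1" "\<And>E. E \<subseteq> all_pairs n \<Longrightarrow> P E \<Longrightarrow> Q E"
  shows "prob_Gnp n p P \<le> prob_Gnp n p Q"
  unfolding prob_Gnp_def using assms by (intro sum_mono) auto

lemma prob_union:
  assumes "0 \<le> p" "p \<le> 1" "finite I"
  shows "prob_Gnp n p (\<lambda>E. \<exists>i\<in>I. P i E) \<le> (\<Sum>i\<in>I. prob_Gnp n p (P i))"
proof -
  define w where "w E = p ^ card E * (1 - p) ^ (card (all_pairs n) - card E)" for E :: "nat set set"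
  have w0: "0 \<le> w E" for E unfolding w_def using assms by simp
  have "prob_Gnp n p (\<lambda>E. \<exists>i\<in>I. P i E) = (\<Sum>E\<in>Pow (all_pairs n). if \<exists>i\<in>I. P i E then w E else 0)"
    unfolding prob_Gnp_def w_def ..
  also have "\<dots> \<le> (\<Sum>E\<in>Pow (all_pairs n). \<Sum>i\<in>I. if P i E then w E else 0)"
  proof (rule sum_mono)
    fix E
    show "(if \<exists>i\<in>I. P i E then w E else 0) \<le> (\<Sum>i\<in>I. if P i E then w E else 0)"
    proof (cases "\<exists>i\<in>I. P i E")
      case True
      then obtain i where i: "i \<in> I" "P i E" by blast
      have "(if P i E then w E else 0) \<le> (\<Sum>i\<in>I. if P i E then w E else 0)"
        by (rule member_le_sum[OF i(1)]) (use w0 assms in auto)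
      with True i show ?thesis by simp
    next
      case False
      thus ?thesis using w0 by (simp add: sum_nonneg)
    qed
  qed
  also have "\<dots> = (\<Sum>i\<in>I. \<Sum>E\<in>Pow (all_pairs n). if P i E then w E else 0)"
    by (rule sum.swap)
  also have "\<dots> = (\<Sum>i\<in>I. prob_Gnp n p (P i))"
    unfolding prob_Gnp_def w_def ..
  finally show ?thesis .
qed

lemma prob_superset:
  assumes "0 \<le> p" "p \<le> 1" "F \<subseteq> all_pairs n"
  shows "prob_Gnp n p (\<lambda>E. F \<subseteq> E) = p ^ card F"
proof -
  define S where "S = all_pairs n"
  have fS: "finite S" unfolding S_def by (rule finite_all_pairs)
  have fF: "finite F" using assms(3) fS S_def finite_subset by auto
  define w where "w E = p ^ card E * (1 - p) ^ (card S - card E)" for E :: "nat set set"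
  have "prob_Gnp n p (\<lambda>E. F \<subseteq> E) = (\<Sum>E\<in>Pow S. if F \<subseteq> E then w E else 0)"
    unfolding prob_Gnp_def w_def S_def ..
  also have "\<dots> = (\<Sum>E\<in>{E\<in>Pow S. F \<subseteq> E}. w E)"
    by (rule sum.inter_filter[symmetric]) (simp add: fS)
  also have "{E\<in>Pow S. F \<subseteq> E} = (\<lambda>E'. E' \<union> F) ` Pow (S - F)"
  proof
    show "{E\<in>Pow S. F \<subseteq> E} \<subseteq> (\<lambda>E'. E' \<union> F) ` Pow (S - F)"
    proof
      fix E assume "E \<in> {E\<in>Pow S. F \<subseteq> E}"
      hence "E = (E - F) \<union> F" "E - F \<in> Pow (S - F)" by auto
      thus "E \<in> (\<lambda>E'. E' \<union> F) ` Pow (S - F)" by blast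
    qed
  qed (use assms(3) S_def in auto)
  also have "(\<Sum>E\<in>(\<lambda>E'. E' \<union> F) ` Pow (S - F). w E) = (\<Sum>E'\<in>Pow (S - F). w (E' \<union> F))"
    by (rule sum.reindex_cong[where l = "\<lambda>E'. E' \<union> F"]) (auto simp: inj_on_def)
  also have "\<dots> = (\<Sum>E'\<in>Pow (S - F). p ^ card F * (p ^ card E' * (1 - p) ^ (card (S - F) - card E')))"
  proof (rule sum.cong)
    fix E' assume E': "E' \<in> Pow (S - F)"
    have fE': "finite E'" using E' fS finite_subset by auto
    have disj: "E' \<inter> F = {}" using E' by auto
    have c1: "card (E' \<union> F) = card E' + card F" using card_Un_disjoint[OF fE' fF disj] .
    have c2: "card (S - F) = card S - card F" using assms(3) S_def fF by (simp add: card_Diff_subset)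
    have "card E' \<le> card (S - F)" using E' fS by (intro card_mono) auto
    hence c3: "card S - (card E' + card F) = card (S - F) - card E'" using c2 by simp
    show "w (E' \<union> F) = p ^ card F * (p ^ card E' * (1 - p) ^ (card (S - F) - card E'))"
      unfolding w_def c1 c3 by (simp add: power_add)
  qed simp
  also have "\<dots> = p ^ card F * (p + (1 - p)) ^ card (S - F)"
    by (simp add: sum_distrib_left[symmetric] sum_pow_card fS)
  finally show ?thesis by simp
qed



definition ff_inv :: "nat set set \<Rightarrow> (nat \<Rightarrow> nat) \<Rightarrow> bool" where
  "ff_inv E col = (\<forall>w j. 1 \<le> j \<and> j < col w \<longrightarrow> (\<exists>u. {u, w} \<in> E \<and> col u = j))"

lemma ff_step_inv:
  assumes inv: "ff_inv E col" and v0: "col v = 0"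
  shows "ff_inv E (ff_step E v col)"
  unfolding ff_inv_def
proof (intro allI impI)
  fix w j assume j: "1 \<le> j \<and> j < ff_step E v col w"
  define m where "m = (LEAST k::nat. 1 \<le> k \<and> (\<forall>u. {u, v} \<in> E \<and> col u \<noteq> 0 \<longrightarrow> col u \<noteq> k))"
  have st: "ff_step E v col = col(v := m)" unfolding ff_step_def m_def ..
  show "\<exists>u. {u, w} \<in> E \<and> ff_step E v col u = j"
  proof (cases "w = v")
    case True
    with j st have "j < m" by simp
    hence "\<not> (1 \<le> j \<and> (\<forall>u. {u, v} \<in> E \<and> col u \<noteq> 0 \<longrightarrow> col u \<noteq> j))"
      unfolding m_def by (rule not_less_Least)
    with j obtain u where u: "{u, v} \<in> E" "col u \<noteq> 0" "col u = j" by blast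
    with v0 have "u \<noteq> v" by auto
    with u True st show ?thesis by auto
  next
    case False
    with j st have "1 \<le> j \<and> j < col w" by simp
    with inv obtain u where u: "{u, w} \<in> E" "col u = j" unfolding ff_inv_def by blast
    with v0 j have "u \<noteq> v" by auto
    with u st show ?thesis by auto
  qed
qed

lemma fold_inv:
  "distinct xs \<Longrightarrow> (\<forall>x\<in>set xs. col x = 0) \<Longrightarrow> ff_inv E col \<Longrightarrow> ff_inv E (fold (ff_step E) xs col)"
proof (induction xs arbitrary: col)
  case Nil thus ?case by simp
next
  case (Cons x xs)
  have "ff_inv E (ff_step E x col)" using Cons.prems by (intro ff_step_inv) auto
  moreover have "\<forall>y\<in>set xs. ff_step E x col y = 0"
    using Cons.prems unfolding ff_step_def by auto
  ultimately show ?case using Cons by simp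
qed

lemma ff_coloring_inv:
  assumes "distinct xs" shows "ff_inv E (ff_coloring E xs)"
  unfolding ff_coloring_def by (rule fold_inv[OF assms]) (auto simp: ff_inv_def)

definition Fs :: "nat \<Rightarrow> nat \<Rightarrow> nat set \<Rightarrow> nat set \<Rightarrow> nat set set" where
  "Fs u v A B = insert {u, v} ((\<lambda>a. {u, a}) ` A \<union> (\<lambda>b. {v, b}) ` B)"

lemma grundy_witness:
  "\<exists>xs. distinct xs \<and> set xs = {1..n} \<and> grundy n E = card (ff_coloring E xs ` set xs)"
proof -
  define G where "G = {card (ff_coloring E xs ` set xs) | xs. distinct xs \<and> set xs = {1..n}}"
  have "G \<subseteq> {0..n}"
  proof
    fix g assume "g \<in> G"
    then obtain xs where xs: "distinct xs" "set xs = {1..n}" "g = card (ff_coloring E xs ` set xs)"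
      unfolding G_def by blast
    have "g \<le> card (set xs)" unfolding xs(3) by (rule card_image_le) simp
    thus "g \<in> {0..n}" using xs(2) by simp
  qed
  hence fin: "finite G" by (rule finite_subset) simp
  have "card (ff_coloring E [1..<n+1] ` set [1..<n+1]) \<in> G" unfolding G_def
    by (intro CollectI exI[of _ "[1..<n+1]"]) auto
  hence ne: "G \<noteq> {}" by blast
  have "grundy n E \<in> G" unfolding grundy_def G_def[symmetric] by (rule Max_in[OF fin ne])
  thus ?thesis unfolding G_def by auto
qed

lemma grundy_bad:
  assumes Esub: "E \<subseteq> all_pairs n" and g: "grundy n E \<ge> d + 3"
  shows "\<exists>u v A B. u \<in> {1..n} \<and> v \<in> {1..n} \<and> u \<noteq> v \<and> A \<subseteq> {1..n} \<and> card A = d \<and>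
     B \<subseteq> {1..n} \<and> card B = d \<and> A \<inter> {u, v} = {} \<and> B \<inter> {u, v} = {} \<and> Fs u v A B \<subseteq> E"
proof -
  obtain xs where xs: "distinct xs" "set xs = {1..n}" "grundy n E = card (ff_coloring E xs ` set xs)"
    using grundy_witness by blast
  define col where "col = ff_coloring E xs"
  have inv: "ff_inv E col" unfolding col_def by (rule ff_coloring_inv[OF xs(1)])
  have nb: "x \<noteq> y \<and> x \<in> {1..n} \<and> y \<in> {1..n}" if "{x, y} \<in> E" for x y
    using all_pairsD[of x y n] that Esub by blast
  obtain v where v: "col v \<ge> d + 2"
  proof (rule ccontr)
    assume "\<not> thesis"
    have "\<forall>v. col v \<le> d + 1"
    proof
      fix w show "col w \<le> d + 1"
      proof (rule ccontr)
        assume "\<not> col w \<le> d + 1"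
        hence "d + 2 \<le> col w" by simp
        thus False using that \<open>\<not> thesis\<close> by blast
      qed
    qed
    hence "col ` set xs \<subseteq> {0..d+1}" by auto
    hence "card (col ` set xs) \<le> card {0..d+1}" by (intro card_mono) auto
    with g xs(3) col_def show False by simp
  qed
  define m where "m = col v"
  obtain u where u: "{u, v} \<in> E" "col u = m - 1"
  proof -
    have "1 \<le> m - 1 \<and> m - 1 < col v" using v m_def by auto
    thus ?thesis using inv that unfolding ff_inv_def m_def by blast
  qed
  have uv: "u \<noteq> v" "u \<in> {1..n}" "v \<in> {1..n}" using nb[OF u(1)] by auto
  define A' where "A' = {w. {u, w} \<in> E \<and> col w \<in> {1..m-2}}"
  define B' where "B' = {w. {v, w} \<in> E \<and> col w \<in> {1..m-2}}"
  have A'sub: "A' \<subseteq> {1..n}" unfolding A'_def using nb by blast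
  have B'sub: "B' \<subseteq> {1..n}" unfolding B'_def using nb by blast
  have finA: "finite A'" using A'sub finite_subset by blast
  have finB: "finite B'" using B'sub finite_subset by blast
  have "{1..m-2} \<subseteq> col ` A'"
  proof
    fix j assume "j \<in> {1..m-2}"
    hence "1 \<le> j \<and> j < col u" using u(2) v m_def by auto
    then obtain w where "{w, u} \<in> E" "col w = j" using inv unfolding ff_inv_def by blast
    thus "j \<in> col ` A'" unfolding A'_def using \<open>j \<in> {1..m-2}\<close> by (auto simp: insert_commute)
  qed
  hence "card {1..m-2} \<le> card (col ` A')" by (intro card_mono) (use finA in auto)
  also have "\<dots> \<le> card A'" using finA by (rule card_image_le)
  finally have cA: "d \<le> card A'" using v m_def by simp
  have "{1..m-2} \<subseteq> col ` B'"
  proof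
    fix j assume "j \<in> {1..m-2}"
    hence "1 \<le> j \<and> j < col v" using v m_def by auto
    then obtain w where "{w, v} \<in> E" "col w = j" using inv unfolding ff_inv_def by blast
    thus "j \<in> col ` B'" unfolding B'_def using \<open>j \<in> {1..m-2}\<close> by (auto simp: insert_commute)
  qed
  hence "card {1..m-2} \<le> card (col ` B')" by (intro card_mono) (use finB in auto)
  also have "\<dots> \<le> card B'" using finB by (rule card_image_le)
  finally have cB: "d \<le> card B'" using v m_def by simp
  obtain A where A: "A \<subseteq> A'" "card A = d" using obtain_subset_with_card_n[OF cA] by blast
  obtain B where B: "B \<subseteq> B'" "card B = d" using obtain_subset_with_card_n[OF cB] by blast
  have "u \<notin> A'" using nb unfolding A'_def by blast
  moreover have "v \<notin> B'" using nb unfolding B'_def by blast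
  moreover have "u \<notin> B'" using u(2) unfolding B'_def by auto
  moreover have "v \<notin> A'" using m_def unfolding A'_def by auto
  ultimately have disj: "A \<inter> {u, v} = {}" "B \<inter> {u, v} = {}" using A(1) B(1) by blast+
  have e1: "{u, v} \<in> E" using u(1) .
  have e2: "(\<lambda>a. {u, a}) ` A \<subseteq> E" using A(1) unfolding A'_def by blast
  have e3: "(\<lambda>b. {v, b}) ` B \<subseteq> E" using B(1) unfolding B'_def by blast
  have "Fs u v A B \<subseteq> E" unfolding Fs_def using e1 e2 e3 by blast
  moreover have "A \<subseteq> {1..n}" "B \<subseteq> {1..n}" using A(1) B(1) A'sub B'sub by blast+
  ultimately show ?thesis using uv A(2) B(2) disj
    by (intro exI[of _ u] exI[of _ v] exI[of _ A] exI[of _ B]) simp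
qed



lemma card_Fs:
  assumes "u \<noteq> v" "A \<inter> {u, v} = {}" "B \<inter> {u, v} = {}" "finite A" "finite B" "card B = card A"
  shows "card (Fs u v A B) = 2 * card A + 1"
proof -
  have i1: "inj_on (\<lambda>a. {u, a}) A" by (auto simp: inj_on_def doubleton_eq_iff)
  have i2: "inj_on (\<lambda>b. {v, b}) B" by (auto simp: inj_on_def doubleton_eq_iff)
  have d: "(\<lambda>a. {u, a}) ` A \<inter> (\<lambda>b. {v, b}) ` B = {}"
    using assms by (auto simp: doubleton_eq_iff)
  have n: "{u, v} \<notin> (\<lambda>a. {u, a}) ` A \<union> (\<lambda>b. {v, b}) ` B"
    using assms by (auto simp: doubleton_eq_iff)
  have "card ((\<lambda>a. {u, a}) ` A \<union> (\<lambda>b. {v, b}) ` B) = card A + card B"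
    using card_Un_disjoint[OF _ _ d] assms card_image[OF i1] card_image[OF i2] by simp
  thus ?thesis unfolding Fs_def using n assms by simp
qed

lemma Fs_sub:
  assumes "u \<noteq> v" "u \<in> {1..n}" "v \<in> {1..n}" "A \<subseteq> {1..n}" "B \<subseteq> {1..n}"
    "A \<inter> {u, v} = {}" "B \<inter> {u, v} = {}"
  shows "Fs u v A B \<subseteq> all_pairs n"
  unfolding Fs_def using assms by (auto intro!: all_pairsI)

lemma prob_grundy_bound:
  assumes p: "0 \<le> p" "p \<le> 1"
  shows "prob_Gnp n p (\<lambda>E. grundy n E \<ge> d + 3) \<le> real n ^ 2 * real (n choose d) ^ 2 * p ^ (2 * d + 1)"
proof -
  define Cd where "Cd = {A. A \<subseteq> {1..n} \<and> card A = d}"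
  define I where "I = {1..n} \<times> {1..n} \<times> Cd \<times> Cd"
  define Q where "Q = (\<lambda>(u, v, A, B) E. u \<noteq> v \<and> A \<inter> {u, v} = {} \<and> B \<inter> {u, v} = {} \<and> Fs u v A B \<subseteq> E)"
  have fCd: "finite Cd" unfolding Cd_def by (rule finite_subset[of _ "Pow {1..n}"]) auto
  have cCd: "card Cd = n choose d" unfolding Cd_def using n_subsets[of "{1..n}" d] by simp
  have fI: "finite I" unfolding I_def using fCd by simp
  have cI: "card I = n * n * (n choose d) * (n choose d)" unfolding I_def
    by (simp add: card_cartesian_product cCd)
  have "prob_Gnp n p (\<lambda>E. grundy n E \<ge> d + 3) \<le> prob_Gnp n p (\<lambda>E. \<exists>i\<in>I. Q i E)"
  proof (rule prob_mono[OF p])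
    fix E assume "E \<subseteq> all_pairs n" "grundy n E \<ge> d + 3"
    from grundy_bad[OF this] obtain u v A B where
      h: "u \<in> {1..n}" "v \<in> {1..n}" "u \<noteq> v" "A \<subseteq> {1..n}" "card A = d"
     "B \<subseteq> {1..n}" "card B = d" "A \<inter> {u, v} = {}" "B \<inter> {u, v} = {}" "Fs u v A B \<subseteq> E" by blast
    have "(u, v, A, B) \<in> I" unfolding I_def Cd_def using h by auto
    moreover have "Q (u, v, A, B) E" unfolding Q_def using h by simp
    ultimately show "\<exists>i\<in>I. Q i E" by blast
  qed
  also have "\<dots> \<le> (\<Sum>i\<in>I. prob_Gnp n p (Q i))" by (rule prob_union[OF p fI])
  also have "\<dots> \<le> (\<Sum>i\<in>I. p ^ (2 * d + 1))"
  proof (rule sum_mono)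
    fix i assume "i \<in> I"
    then obtain u v A B where i: "i = (u, v, A, B)" "u \<in> {1..n}" "v \<in> {1..n}" "A \<in> Cd" "B \<in> Cd"
      unfolding I_def by auto
    show "prob_Gnp n p (Q i) \<le> p ^ (2 * d + 1)"
    proof (cases "u \<noteq> v \<and> A \<inter> {u, v} = {} \<and> B \<inter> {u, v} = {}")
      case True
      have "Q i = (\<lambda>E. Fs u v A B \<subseteq> E)" unfolding Q_def i(1) using True by auto
      moreover have "prob_Gnp n p (\<lambda>E. Fs u v A B \<subseteq> E) = p ^ card (Fs u v A B)"
        using True i by (intro prob_superset[OF p] Fs_sub) (auto simp: Cd_def)
      moreover have "card (Fs u v A B) = 2 * d + 1"
        using True i card_Fs[of u v A B] fCd by (auto simp: Cd_def intro: finite_subset)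
      ultimately show ?thesis by simp
    next
      case False
      have "Q i = (\<lambda>E. False)" unfolding Q_def i(1) using False by auto
      thus ?thesis unfolding prob_Gnp_def using p by simp
    qed
  qed
  also have "\<dots> = real n ^ 2 * real (n choose d) ^ 2 * p ^ (2 * d + 1)"
    using cI by (simp add: power2_eq_square)
  finally show ?thesis .
qed

lemma choose_le_real: "real (n choose d) \<le> real n ^ d / fact d"
proof (cases "d \<le> n")
  case True
  have "fact d * fact (n - d) * (n choose d) = fact n" by (rule binomial_fact_lemma[OF True])
  hence "fact n div fact (n - d) = fact d * (n choose d)" by (metis fact_nonzero nonzero_mult_div_cancel_right mult.commute mult.assoc)
  hence "fact d * (n choose d) \<le> n ^ d" using fact_div_fact_le_pow[OF True] by simp
  hence "real (fact d * (n choose d)) \<le> real (n ^ d)" by linarith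
  hence "fact d * real (n choose d) \<le> real n ^ d" by simp
  thus ?thesis by (simp add: field_simps)
next
  case False thus ?thesis by (simp add: binomial_eq_0 not_le)
qed

lemma pow_fact_le_exp: "real d ^ d / fact d \<le> exp (real d)"
proof -
  have s: "summable (\<lambda>k. real d ^ k / fact k)"
    using exp_converges[of "real d"] by (simp add: sums_iff divide_inverse mult.commute scaleR_conv_of_real)
  have "exp (real d) = (\<Sum>k. real d ^ k / fact k)"
    using exp_converges[of "real d"] by (simp add: sums_iff divide_inverse mult.commute scaleR_conv_of_real)
  moreover have "sum (\<lambda>k. real d ^ k / fact k) {d} \<le> (\<Sum>k. real d ^ k / fact k)"
    by (rule sum_le_suminf[OF s]) auto
  ultimately show ?thesis by simp
qed

lemma main_ineq:
  fixes c :: real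
  assumes "c > 0" "n > 0" "d > 0"
  shows "real n ^ 2 * real (n choose d) ^ 2 * (c / real n) ^ (2 * d + 1) \<le> real n * c * (c * exp 1 / real d) ^ (2 * d)"
proof -
  have f0: "fact d > (0::real)" by simp
  have "real (n choose d) ^ 2 \<le> (real n ^ d / fact d) ^ 2"
    by (rule power_mono[OF choose_le_real]) simp
  hence "real n ^ 2 * real (n choose d) ^ 2 * (c / real n) ^ (2 * d + 1)
      \<le> real n ^ 2 * (real n ^ d / fact d) ^ 2 * (c / real n) ^ (2 * d + 1)"
    using assms by (intro mult_right_mono mult_left_mono) auto
  also have "\<dots> = real n * c * (c ^ d / fact d) ^ 2"
    using assms by (simp add: field_simps power_mult_distrib power_add power_mult[symmetric] power2_eq_square)
       (simp add: mult_2_right power_add)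
  also have "\<dots> \<le> real n * c * ((c * exp 1 / real d) ^ d) ^ 2"
  proof -
    have "real d ^ d \<le> exp (real d) * fact d" using pow_fact_le_exp[of d] f0 by (simp add: field_simps)
    hence "c ^ d / fact d \<le> (c * exp 1 / real d) ^ d"
      using assms f0 by (simp add: field_simps power_mult_distrib exp_of_nat_mult[symmetric])
    thus ?thesis using assms by (intro mult_left_mono power_mono) auto
  qed
  also have "\<dots> = real n * c * (c * exp 1 / real d) ^ (2 * d)"
    by (simp add: power_mult[symmetric] mult.commute)
  finally show ?thesis .
qed



lemma asymp1: "(\<lambda>n::nat. ln (ln (real n)) powr (-1/2) + 4 * ln (ln (real n)) / ln (real n)) \<longlonglongrightarrow> 0"
  by real_asymp

lemma asymp2:
  fixes K L :: real
  shows "filterlim (\<lambda>n::nat. ln (real n) + L + 2 * ((1/2 + ln(ln (real n)) powr (-1/2)) * ln (real n) / ln(ln (real n))) * (K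
     - ln ((1/2 + ln(ln (real n)) powr (-1/2)) * ln (real n) / ln(ln (real n))))) at_bot sequentially"
  by real_asymp

lemma asymp3: "filterlim (\<lambda>n::nat. (1/2 + ln(ln (real n)) powr (-1/2)) * ln (real n) / ln(ln (real n))) at_top sequentially"
  by real_asymp

lemma asymp4: "filterlim (\<lambda>n::nat. ln (ln (real n))) at_top sequentially"
  by real_asymp

theorem corollary2:
  fixes c :: real
  assumes "c > 0"
  shows "\<exists>\<epsilon> :: nat \<Rightarrow> real. \<epsilon> \<longlonglongrightarrow> 0 \<and>
    (\<lambda>n. prob_Gnp n (c / real n)
       (\<lambda>E. real (grundy n E) \<le> (1/2 + \<epsilon> n) * ln (real n) / ln (ln (real n)))) \<longlonglongrightarrow> 1"
proof -
  define \<delta> where "\<delta> n = ln (ln (real n)) powr (-1/2)" for n :: nat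
  define x where "x n = (1/2 + \<delta> n) * ln (real n) / ln (ln (real n))" for n :: nat
  define \<epsilon> where "\<epsilon> n = \<delta> n + 4 * ln (ln (real n)) / ln (real n)" for n :: nat
  define d where "d n = nat \<lceil>x n\<rceil>" for n :: nat
  define bnd where "bnd n = exp (ln (real n) + ln c + 2 * x n * ((ln c + 1) - ln (x n)))" for n :: nat
  have e0: "\<epsilon> \<longlonglongrightarrow> 0" unfolding \<epsilon>_def \<delta>_def using asymp1 .
  have b0: "bnd \<longlonglongrightarrow> 0"
  proof -
    have "filterlim (\<lambda>n. ln (real n) + ln c + 2 * x n * ((ln c + 1) - ln (x n))) at_bot sequentially"
      unfolding x_def \<delta>_def by (rule asymp2)
    thus ?thesis unfolding bnd_def by (rule filterlim_compose[OF exp_at_bot])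
  qed
  have ev: "eventually (\<lambda>n. x n \<ge> c * exp 1 + 1 \<and> ln (ln (real n)) > 0 \<and> real n \<ge> c + 3) sequentially"
  proof -
    have "eventually (\<lambda>n. x n \<ge> c * exp 1 + 1) sequentially"
      using asymp3 unfolding x_def \<delta>_def filterlim_at_top by blast
    moreover have "eventually (\<lambda>n. ln (ln (real n)) > 0) sequentially"
      using asymp4 unfolding filterlim_at_top_dense by blast
    moreover have "eventually (\<lambda>n::nat. real n \<ge> c + 3) sequentially"
      using filterlim_real_sequentially unfolding filterlim_at_top by blast
    ultimately show ?thesis by eventually_elim auto
  qed
  define P where "P n = prob_Gnp n (c / real n)
       (\<lambda>E. real (grundy n E) \<le> (1/2 + \<epsilon> n) * ln (real n) / ln (ln (real n)))" for n
  have bounds: "1 - bnd n \<le> P n \<and> P n \<le> 1"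
    if hx: "x n \<ge> c * exp 1 + 1" and hl: "ln (ln (real n)) > 0" and hn: "real n \<ge> c + 3" for n
  proof -
    define p where "p = c / real n"
    have n0: "n > 0" using hn assms by simp
    have p01: "0 \<le> p" "p \<le> 1" unfolding p_def using assms hn by auto
    have ln0: "ln (real n) > 0" using hn assms by simp
    have cexp: "c * exp 1 > 0" using assms by simp
    have x0: "x n > 0" using hx cexp by linarith
    have dx: "x n \<le> real (d n)" "real (d n) \<le> x n + 1" unfolding d_def using x0 by linarith+
    have d0: "d n > 0" using dx x0 by linarith
    have rhs: "(1/2 + \<epsilon> n) * ln (real n) / ln (ln (real n)) = x n + 4"
      unfolding \<epsilon>_def x_def using ln0 hl by (simp add: field_simps)
    have "prob_Gnp n p (\<lambda>E. \<not> grundy n E \<ge> d n + 3) \<le> P n"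
      unfolding P_def p_def[symmetric]
    proof (rule prob_mono[OF p01])
      fix E assume "\<not> grundy n E \<ge> d n + 3"
      hence "real (grundy n E) \<le> real (d n) + 2" by linarith
      thus "real (grundy n E) \<le> (1/2 + \<epsilon> n) * ln (real n) / ln (ln (real n))"
        unfolding rhs using dx by linarith
    qed
    moreover have "prob_Gnp n p (\<lambda>E. \<not> grundy n E \<ge> d n + 3) = 1 - prob_Gnp n p (\<lambda>E. grundy n E \<ge> d n + 3)"
      using prob_total[OF p01, of n "\<lambda>E. grundy n E \<ge> d n + 3"] by linarith
    moreover have "prob_Gnp n p (\<lambda>E. grundy n E \<ge> d n + 3) \<le> bnd n"
    proof -
      have "prob_Gnp n p (\<lambda>E. grundy n E \<ge> d n + 3) \<le> real n ^ 2 * real (n choose d n) ^ 2 * p ^ (2 * d n + 1)"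
        by (rule prob_grundy_bound[OF p01])
      also have "\<dots> \<le> real n * c * (c * exp 1 / real (d n)) ^ (2 * d n)"
        unfolding p_def by (rule main_ineq[OF assms n0 d0])
      also have "\<dots> \<le> real n * c * (c * exp 1 / x n) ^ (2 * d n)"
        using assms n0 x0 dx cexp
        by (intro mult_left_mono power_mono divide_left_mono) (auto intro: mult_pos_pos)
      also have "(c * exp 1 / x n) ^ (2 * d n) = (c * exp 1 / x n) powr (real (2 * d n))"
        using powr_realpow[of "c * exp 1 / x n" "2 * d n"] cexp x0 by simp
      also have "\<dots> \<le> (c * exp 1 / x n) powr (2 * x n)"
        using cexp x0 dx hx by (intro powr_mono') auto
      also have "(c * exp 1 / x n) powr (2 * x n) = exp (2 * x n * ((ln c + 1) - ln (x n)))"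
        using cexp x0 assms by (simp add: powr_def ln_div ln_mult)
      also have "real n * c * exp (2 * x n * ((ln c + 1) - ln (x n))) = bnd n"
        unfolding bnd_def using n0 assms by (simp add: exp_add)
      finally show ?thesis using n0 assms by (simp add: mult_left_mono)
    qed
    ultimately have "1 - bnd n \<le> P n" by linarith
    moreover have "P n \<le> 1" unfolding P_def p_def[symmetric] by (rule prob_le1[OF p01])
    ultimately show ?thesis by blast
  qed
  have "P \<longlonglongrightarrow> 1"
  proof (rule tendsto_sandwich[of "\<lambda>n. 1 - bnd n" _ _ "\<lambda>_. 1"])
    show "eventually (\<lambda>n. 1 - bnd n \<le> P n) sequentially"
      using ev by eventually_elim (use bounds in blast)
    show "eventually (\<lambda>n. P n \<le> 1) sequentially"
      using ev by eventually_elim (use bounds in blast)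
    show "(\<lambda>n. 1 - bnd n) \<longlonglongrightarrow> 1" using tendsto_diff[OF tendsto_const b0, of 1] by simp
  qed simp
  thus ?thesis using e0 unfolding P_def by blast
qed


end
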